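(* Under the standing assumptions, for $\theta\in(\pi/2,\pi)$ one has $w(\theta)=0$ if and only if $a>1/4$ and $\theta=\cos^{-1}\!\left(-\frac{1}{2\sqrt a}\right)$.
   Context: Standing assumptions: $a,b\in\mathbb{R}$ with $b>0$, $1+a+b>0$, $9-27a+b>0$, $2-8a+8a^2+ab\ne0$, $b+1-a\ne0$. Let $f^*(\zeta,\theta)=(\zeta+2\cos\theta)(2\zeta\cos\theta+1)+b\zeta-a(\zeta+2\cos\theta)^3$. Under these assumptions, for each $\theta\in(\pi/2,\pi)$ the polynomial $f^*(\cdot,\theta)$ has exactly one real zero in $(-1,1)$; denote it $w(\theta)$ (so $w(\theta)=1/\zeta(\theta)$). *)

theory Defs
  imports Complex_Main
begin

definition f_star :: "real \<Rightarrow> real \<Rightarrow> real \<Rightarrow> real \<Rightarrow> real" where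
  "f_star a b \<zeta> \<theta> =
     (\<zeta> + 2 * cos \<theta>) * (2 * \<zeta> * cos \<theta> + 1) + b * \<zeta> - a * (\<zeta> + 2 * cos \<theta>) ^ 3"

text \<open>w(theta): the (unique, under the standing assumptions) real zero of f_star in (-1,1).\<close>
definition w :: "real \<Rightarrow> real \<Rightarrow> real \<Rightarrow> real" where
  "w a b \<theta> = (THE \<zeta>. \<zeta> \<in> {-1<..<1} \<and> f_star a b \<zeta> \<theta> = 0)"

end

theory Submission
  imports Defs
begin

lemma divdiff:
  fixes a b z1 z2 t :: real
  shows "f_star a b z1 t - f_star a b z2 t = (z1 - z2) *
    (2 * cos t * (z1 + z2) + 1 + 4 * (cos t)^2 + b
     - a * ((z1 + 2*cos t)^2 + (z1 + 2*cos t)*(z2 + 2*cos t) + (z2 + 2*cos t)^2))"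
  unfolding f_star_def by (simp add: algebra_simps power2_eq_square power3_eq_cube)

lemma sq_lt: fixes x r :: real assumes "\<bar>x\<bar> < r" shows "x^2 < r^2"
  using assms by (metis abs_ge_zero abs_power2 order_le_less_trans power2_abs power_strict_mono zero_less_numeral)

lemma prod_lt: fixes x y r :: real assumes "\<bar>x\<bar> < r" "\<bar>y\<bar> < r" shows "x*y < r^2"
proof -
  have "x*y \<le> \<bar>x\<bar>*\<bar>y\<bar>" by (simp add: abs_mult[symmetric])
  also have "\<dots> < r*r" using assms by (simp add: mult_strict_mono')
  finally show ?thesis by (simp add: power2_eq_square)
qed

lemma Qpos:
  fixes a b c z1 z2 :: real
  assumes b: "b > 0" and h2: "9 - 27 * a + b > 0"
    and c: "-1 < c" "c < 0" and z: "-1 < z1" "z1 < 1" "-1 < z2" "z2 < 1"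
  shows "2 * c * (z1 + z2) + 1 + 4 * c^2 + b
     - a * ((z1 + 2*c)^2 + (z1 + 2*c)*(z2 + 2*c) + (z2 + 2*c)^2) > 0"
proof -
  define u1 where "u1 = z1 + 2*c"
  define u2 where "u2 = z2 + 2*c"
  define S where "S = u1^2 + u1*u2 + u2^2"
  have "S = (u1 + u2/2)^2 + 3/4*u2^2" unfolding S_def by (simp add: power2_eq_square algebra_simps)
  hence S0: "S \<ge> 0" by simp
  have "2 * c * (z1 + z2) + 1 + 4 * c^2 + b - a * S > 0"
  proof (cases "a \<le> 0")
    case True
    have "a * S \<le> 0" using True S0 by (simp add: mult_nonpos_nonneg)
    moreover have "2 * c * (z1 + z2) > 4 * c"
      proof -
      have "c * (z1 + z2) > c * 2" using c z by (intro mult_strict_left_mono_neg) auto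
      thus ?thesis by simp
    qed
    moreover have "4 * c + 1 + 4 * c^2 = (1 + 2*c)^2" by (simp add: power2_eq_square algebra_simps)
    moreover have "(1 + 2*c)^2 \<ge> 0" by simp
    ultimately show ?thesis using b by linarith
  next
    case False
    have a1: "\<bar>u1\<bar> < 3" "\<bar>u2\<bar> < 3" using c z unfolding u1_def u2_def by auto
    have "u1^2 < 3^2" "u2^2 < 3^2" "u1*u2 < 3^2" using sq_lt[OF a1(1)] sq_lt[OF a1(2)] prod_lt[OF a1] by auto
    hence S27: "S < 27" unfolding S_def by simp
    have zz: "\<bar>z1\<bar> < 1" "\<bar>z2\<bar> < 1" using z by auto
    have "z1^2 < 1^2" "z2^2 < 1^2" "z1*z2 < 1^2" using sq_lt[OF zz(1)] sq_lt[OF zz(2)] prod_lt[OF zz] by auto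
    hence T3: "z1^2 + z1*z2 + z2^2 < 3" by simp
    have id: "2 * c * (z1 + z2) + 1 + 4 * c^2 - S/3 = 1 - (z1^2 + z1*z2 + z2^2)/3"
      unfolding S_def u1_def u2_def by (simp add: power2_eq_square algebra_simps)
    have "a * S \<le> (9 + b)/27 * S" using S0 h2 by (intro mult_right_mono) auto
    moreover have "b * S \<le> b * 27" using b S27 by simp
    moreover have "(9 + b)/27 * S = S/3 + (b * S)/27" by (simp add: algebra_simps)
    ultimately show ?thesis using id T3 b by argo
  qed
  thus ?thesis unfolding S_def u1_def u2_def .
qed

lemma E1:
  fixes a b p :: real
  assumes "b > 0" "9 - 27 * a + b > 0" "1 < p" "p < 3"
  shows "p^2 * (1 - a*p) + b > 0"
proof (cases "a \<le> 0")
  case True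
  hence "a * p \<le> 0" using assms by (simp add: mult_nonpos_nonneg)
  hence "p^2 * (1 - a*p) \<ge> 0" by simp
  thus ?thesis using assms by linarith
next
  case False
  have "a * p < a * 3" using False assms by simp
  hence ap: "a*p < 1 + b/9" using assms by linarith
  have p2: "p^2 > 0" "p^2 < 9" using assms sq_lt[of p 3] by auto
  have "p^2 * (1 - a*p) > p^2 * (- b/9)" using ap p2 by (intro mult_strict_left_mono) auto
  moreover have "b/9 * p^2 < b/9 * 9" using p2 assms by (intro mult_strict_left_mono) auto
  ultimately show ?thesis by (simp add: algebra_simps)
qed

lemma E2:
  fixes a b v :: real
  assumes "b > 0" "1 + a + b > 0" "9 - 27 * a + b > 0" "-1 < v" "v < 1"
  shows "v^2 * (1 - a*v) + b > 0"
proof -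
  have "a*v \<le> \<bar>a\<bar> * \<bar>v\<bar>" by (simp add: abs_mult[symmetric])
  also have "\<dots> \<le> \<bar>a\<bar>" using assms by (simp add: mult_left_le)
  finally have k: "1 - a*v \<ge> 1 - \<bar>a\<bar>" by linarith
  have "\<bar>v\<bar> < 1" using assms by auto
  hence v2: "v^2 \<le> 1" using sq_lt[of v 1] by auto
  have ab: "1 - \<bar>a\<bar> + b > 0" using assms by (cases "a \<ge> 0") auto
  show ?thesis
  proof (cases "1 - a*v \<ge> 0")
    case True
    hence "v^2 * (1 - a*v) \<ge> 0" by simp
    thus ?thesis using assms by linarith
  next
    case False
    have "v^2 * (1 - a*v) \<ge> v^2 * (1 - \<bar>a\<bar>)" using k by (intro mult_left_mono) auto
    moreover have "v^2 * (1 - \<bar>a\<bar>) \<ge> (1 - \<bar>a\<bar>)"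
      using mult_right_mono_neg[OF v2, of "1 - \<bar>a\<bar>"] False k by simp
    ultimately show ?thesis using ab by linarith
  qed
qed

theorem mainTheorem11:
  fixes a b \<theta> :: real
  assumes "b > 0" and "1 + a + b > 0" and "9 - 27 * a + b > 0"
    and "2 - 8 * a + 8 * a ^ 2 + a * b \<noteq> 0" and "b + 1 - a \<noteq> 0"
    and "\<theta> \<in> {pi / 2<..<pi}"
  shows "w a b \<theta> = 0 \<longleftrightarrow> (a > 1 / 4 \<and> \<theta> = arccos (- 1 / (2 * sqrt a)))"
proof -
  define c where "c = cos \<theta>"
  have th: "pi/2 < \<theta>" "\<theta> < pi" using assms(6) by auto
  have c0: "c < 0" unfolding c_def using cos_monotone_0_pi[of "pi/2" \<theta>] th by simp
  have c1: "-1 < c" unfolding c_def using cos_monotone_0_pi[of \<theta> pi] th by simp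
  let ?f = "\<lambda>z. f_star a b z \<theta>"
  have fm1: "?f (-1) = - ((1 - 2*c)^2 * (1 - a*(1 - 2*c)) + b)"
    unfolding f_star_def c_def[symmetric] by (simp add: algebra_simps power2_eq_square power3_eq_cube)
  have fp1: "?f 1 = (1 + 2*c)^2 * (1 - a*(1 + 2*c)) + b"
    unfolding f_star_def c_def[symmetric] by (simp add: algebra_simps power2_eq_square power3_eq_cube)
  have neg: "?f (-1) < 0" using fm1 E1[of b a "1 - 2*c"] assms c0 c1 by simp
  have pos: "?f 1 > 0" using fp1 E2[of b a "1 + 2*c"] assms c0 c1 by simp
  have cont: "\<forall>x. -1 \<le> x \<and> x \<le> 1 \<longrightarrow> isCont ?f x"
    unfolding f_star_def by (intro allI impI continuous_intros)
  obtain x where x: "-1 \<le> x" "x \<le> 1" "?f x = 0"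
    using IVT[of ?f "-1" 0 1] neg pos cont by force
  have xin: "x \<in> {-1<..<1}" using x neg pos by (cases "x = -1"; cases "x = 1") auto
  have uniq: "z1 = z2" if "z1 \<in> {-1<..<1}" "z2 \<in> {-1<..<1}" "?f z1 = ?f z2" for z1 z2
  proof -
    have "?f z1 - ?f z2 = (z1 - z2) * (2 * c * (z1 + z2) + 1 + 4 * c^2 + b
     - a * ((z1 + 2*c)^2 + (z1 + 2*c)*(z2 + 2*c) + (z2 + 2*c)^2))"
      using divdiff[of a b z1 \<theta> z2] unfolding c_def by simp
    moreover have "2 * c * (z1 + z2) + 1 + 4 * c^2 + b
     - a * ((z1 + 2*c)^2 + (z1 + 2*c)*(z2 + 2*c) + (z2 + 2*c)^2) > 0"
      using Qpos[of b a c z1 z2] assms c0 c1 that by auto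
    ultimately show ?thesis using that(3) by simp
  qed
  have wx: "w a b \<theta> = x" unfolding w_def
    using xin x(3) uniq by (intro the_equality) auto
  have "w a b \<theta> = 0 \<longleftrightarrow> ?f 0 = 0"
    using wx x(3) xin uniq[of x 0] by auto
  also have "?f 0 = 2 * c * (1 - 4 * a * c^2)"
    unfolding f_star_def c_def[symmetric] by (simp add: algebra_simps power2_eq_square power3_eq_cube)
  also have "(2 * c * (1 - 4 * a * c^2) = 0) \<longleftrightarrow> 4 * a * c^2 = 1" using c0 by auto
  also have "\<dots> \<longleftrightarrow> (a > 1 / 4 \<and> \<theta> = arccos (- 1 / (2 * sqrt a)))"
  proof
    assume h: "4 * a * c^2 = 1"
    have c2: "c^2 > 0" "c^2 < 1" using c0 c1 sq_lt[of c 1] by auto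
    have aeq: "a = 1 / (4 * c^2)" using h c2 by (simp add: field_simps)
    have "a > 0" using aeq c2 by simp
    hence "4 * a * c^2 < 4 * a * 1" using c2 by (intro mult_strict_left_mono) auto
    hence a4: "a > 1/4" using h by simp
    have sq: "sqrt a = -1 / (2*c)"
    proof -
      have "(-1 / (2*c))^2 = a" using aeq by (simp add: power2_eq_square field_simps)
      moreover have "-1/(2*c) \<ge> 0" using c0 by (simp add: divide_nonneg_neg)
      ultimately show ?thesis using real_sqrt_unique by blast
    qed
    have "- 1 / (2 * sqrt a) = c" unfolding sq using c0 by simp
    hence "arccos (- 1 / (2 * sqrt a)) = \<theta>" unfolding c_def using th by (simp add: arccos_cos)
    thus "a > 1 / 4 \<and> \<theta> = arccos (- 1 / (2 * sqrt a))" using a4 by simp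
  next
    assume h: "a > 1 / 4 \<and> \<theta> = arccos (- 1 / (2 * sqrt a))"
    have s: "sqrt a > 1/2" using h real_sqrt_less_mono[of "1/4" a] by (simp add: real_sqrt_divide)
    have "-1 \<le> - 1 / (2 * sqrt a)" "- 1 / (2 * sqrt a) \<le> 1"
    proof -
      have p: "2 * sqrt a > 1" using s by simp
      hence "1 / (2 * sqrt a) < 1" using h by (simp add: divide_less_eq)
      moreover have "1 / (2 * sqrt a) > 0" using p h by simp
      moreover have "- 1 / (2 * sqrt a) = - (1 / (2 * sqrt a))" by simp
      ultimately show "-1 \<le> - 1 / (2 * sqrt a)" "- 1 / (2 * sqrt a) \<le> 1" by linarith+
    qed
    hence "c = - 1 / (2 * sqrt a)" unfolding c_def using h cos_arccos by auto
    hence "c^2 = 1 / (4 * (sqrt a)^2)" by (simp add: power_divide power_mult_distrib)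
    hence "c^2 = 1 / (4 * a)" using h by simp
    thus "4 * a * c^2 = 1" using h by simp
  qed
  finally show ?thesis .
qed

end
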